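(* Let $q \in (0,1)$ and $p = 1-q$. For any $x \in \{0,1\}^n$, any $l \ge 1$, any $w \in \{0,1\}^l$, and any $z_0,\dots,z_{l-1} \in \mathbb{C}$, if $U$ denotes a random trace of $x$ with deletion probability $q$, then $$\mathbb{E}_x\left[p^{-1} \sum_{j_0 < \dots < j_{l-1}} \left(\prod_{i=0}^{l-1} 1_{U_{j_i} = w_i}\right)\left(\frac{z_0-q}{p}\right)^{j_0}\left(\prod_{i=1}^{l-1} \left(\frac{z_i-q}{p}\right)^{j_i-j_{i-1}-1}\right)\right] = \sum_{k_0 < \dots < k_{l-1}} \left(\prod_{i=0}^{l-1} 1_{x_{k_i}=w_i}\right) z_0^{k_0}\left(\prod_{i=1}^{l-1} z_i^{k_i-k_{i-1}-1}\right),$$ where the sums run over strictly increasing tuples of indices in $\{0,\dots,n-1\}$.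
   Context: A trace of $x \in \{0,1\}^n$ is obtained by deleting each bit of $x$ independently with probability $q$ and concatenating the remaining bits in order. Strings are indexed starting at $0$. For a trace $U$ and an index $j$ not less than the length of $U$, $U_j$ is defined to be $2$, so that the events $U_j = 0$ and $U_j = 1$ are both false. $\mathbb{E}_x$ denotes expectation over the random trace $U$ of $x$. The convention $0^0 = 1$ is used. *)

theory Defs
  imports "HOL-Probability.Probability"
begin

text \<open>Bits are represented as natural numbers in {0,1}.\<close>

definition trace_pmf :: "real \<Rightarrow> nat list \<Rightarrow> nat list pmf" where
  "trace_pmf q x =
     map_pmf (\<lambda>keep. nths x {i. keep i})
       (Pi_pmf {..<length x} False (\<lambda>_. bernoulli_pmf (1 - q)))"

definition sym_at :: "nat list \<Rightarrow> nat \<Rightarrow> nat" where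
  "sym_at U j = (if j < length U then U ! j else 2)"

definition inc_tuples :: "nat \<Rightarrow> nat \<Rightarrow> nat list set" where
  "inc_tuples n l = {js. length js = l \<and> sorted_wrt (<) js \<and> (\<forall>j\<in>set js. j < n)}"

end

theory Submission
  imports Defs
begin

fun Gf :: "nat list \<Rightarrow> nat list \<Rightarrow> (nat \<Rightarrow> complex) \<Rightarrow> complex" where
  "Gf U [] y = 1"
| "Gf [] (c#w) y = 0"
| "Gf (a#U) (c#w) y = (if a = c then Gf U w (\<lambda>i. y (Suc i)) else 0) + y 0 * Gf U (c#w) y"

fun Ew :: "(nat \<Rightarrow> complex) \<Rightarrow> nat \<Rightarrow> nat list \<Rightarrow> complex" where
  "Ew y s [] = 1"
| "Ew y s (j#js) = y 0 ^ (j - s) * Ew (\<lambda>i. y (Suc i)) (Suc j) js"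

lemma Ew_prod: "Ew y s (j#js) = y 0 ^ (j - s) *
   (\<Prod>i\<in>{1..<Suc (length js)}. y i ^ ((j#js)!i - (j#js)!(i-1) - 1))"
proof (induction js arbitrary: j s y)
  case Nil
  then show ?case by simp
next
  case (Cons k js)
  have "(\<Prod>i\<in>{1..<Suc (Suc (length js))}. y i ^ ((j#k#js)!i - (j#k#js)!(i-1) - 1))
     = y 1 ^ (k - j - 1) * (\<Prod>i\<in>{Suc 1..<Suc (Suc (length js))}. y i ^ ((j#k#js)!i - (j#k#js)!(i-1) - 1))"
    by (subst prod.atLeast_Suc_lessThan) auto
  also have "(\<Prod>i\<in>{Suc 1..<Suc (Suc (length js))}. y i ^ ((j#k#js)!i - (j#k#js)!(i-1) - 1))
     = (\<Prod>i\<in>{1..<Suc (length js)}. y (Suc i) ^ ((k#js)!i - (k#js)!(i-1) - 1))"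
    by (simp only: prod.shift_bounds_Suc_ivl) (rule prod.cong, auto)
  finally show ?case using Cons[of "\<lambda>i. y (Suc i)" "Suc j" k] by simp
qed

lemma Ew_prod': "length js = l \<Longrightarrow> 1 \<le> l \<Longrightarrow>
  y 0 ^ (js!0) * (\<Prod>i\<in>{1..<l}. y i ^ (js!i - js!(i-1) - 1)) = Ew y 0 js"
proof (cases js)
  case (Cons j r)
  assume "length js = l"
  then have "l = Suc (length r)" using Cons by simp
  then show ?thesis unfolding Cons Ew_prod nth_Cons_0 diff_zero by simp_all
qed simp

lemma Ew_shift: "Ew y (Suc s) (map Suc js) = Ew y s js"
  by (induction js arbitrary: y s) auto

lemma Ew_Suc: "js \<noteq> [] \<Longrightarrow> Ew y 0 (map Suc js) = y 0 * Ew y 0 js"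
  by (cases js) (auto simp: Ew_shift)

lemma sym_at_Cons_Suc[simp]: "sym_at (a#U) (Suc j) = sym_at U j"
  by (simp add: sym_at_def)
lemma sym_at_Cons_0[simp]: "sym_at (a#U) 0 = a"
  by (simp add: sym_at_def)

lemma inc_tuples_0[simp]: "inc_tuples m 0 = {[]}"
  by (auto simp: inc_tuples_def)
lemma inc_tuples_empty[simp]: "inc_tuples 0 (Suc l) = {}"
  by (auto simp: inc_tuples_def)

lemma finite_inc_tuples[simp]: "finite (inc_tuples m l)"
proof -
  have "inc_tuples m l \<subseteq> {xs. set xs \<subseteq> {..<m} \<and> length xs = l}"
    by (auto simp: inc_tuples_def)
  then show ?thesis using finite_lists_length_eq[of "{..<m}" l] finite_subset by blast
qed

lemma inc_tuples_Suc: "inc_tuples (Suc m) (Suc l) =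
   (\<lambda>js. 0 # map Suc js) ` inc_tuples m l \<union> map Suc ` inc_tuples m (Suc l)"
proof (intro equalityI subsetI)
  fix js assume js: "js \<in> inc_tuples (Suc m) (Suc l)"
  then obtain j r where jr: "js = j # r" by (cases js) (auto simp: inc_tuples_def)
  have pos: "\<forall>k\<in>set r. j < k" and sr: "sorted_wrt (<) r" and bnd: "j < Suc m" "\<forall>k\<in>set r. k < Suc m"
    and len: "length r = l"
    using js jr by (auto simp: inc_tuples_def)
  have r: "r = map Suc (map (\<lambda>k. k - 1) r)"
    using pos by (induction r) auto
  have sr': "sorted_wrt (<) (map (\<lambda>k. k - 1) r)"
    unfolding sorted_wrt_map using sr pos by (rule_tac sorted_wrt_mono_rel[OF _ sr]) auto
  show "js \<in> (\<lambda>js. 0 # map Suc js) ` inc_tuples m l \<union> map Suc ` inc_tuples m (Suc l)"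
  proof (cases "j = 0")
    case True
    then have "js = 0 # map Suc (map (\<lambda>k. k - 1) r)" using jr r by simp
    moreover have "map (\<lambda>k. k - 1) r \<in> inc_tuples m l"
      using sr' bnd len pos True by (auto simp: inc_tuples_def)
    ultimately show ?thesis by blast
  next
    case False
    have "js = map Suc (map (\<lambda>k. k - 1) js)" using jr r False by simp
    moreover have "map (\<lambda>k. k - 1) js \<in> inc_tuples m (Suc l)"
      using sr' bnd len pos False jr by (auto simp: inc_tuples_def)
    ultimately show ?thesis by blast
  qed
next
  fix js assume "js \<in> (\<lambda>js. 0 # map Suc js) ` inc_tuples m l \<union> map Suc ` inc_tuples m (Suc l)"
  then show "js \<in> inc_tuples (Suc m) (Suc l)"
    by (auto simp: inc_tuples_def sorted_wrt_map)
qed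

definition T where "T U w y js = (\<Prod>i<length w. if sym_at U (js!i) = w!i then 1 else 0) * Ew y 0 js"

lemma comb: "length U = m \<Longrightarrow> (\<Sum>js\<in>inc_tuples m (length w). T U w y js) = Gf U w y"
proof (induction U arbitrary: m w y)
  case Nil
  then show ?case by (cases w) (auto simp: T_def)
next
  case (Cons a U)
  then obtain m' where m: "m = Suc m'" "length U = m'" by auto
  show ?case
  proof (cases w)
    case Nil
    then show ?thesis by (simp add: T_def)
  next
    case (Cons c w')
    have disj: "(\<lambda>js. 0 # map Suc js) ` inc_tuples m' (length w') \<inter> map Suc ` inc_tuples m' (Suc (length w')) = {}"
      by auto
    have inj1: "inj_on (\<lambda>js. 0 # map Suc js) X" for X by (auto simp: inj_on_def)
    have inj2: "inj_on (map Suc) X" for X by (auto simp: inj_on_def)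
    have s1: "T (a#U) (c#w') y (0 # map Suc js) = (if a = c then 1 else 0) * T U w' (\<lambda>i. y (Suc i)) js"
      if "js \<in> inc_tuples m' (length w')" for js
    proof -
      have l: "length js = length w'" using that by (auto simp: inc_tuples_def)
      have "(\<Prod>i<length (c#w'). if sym_at (a#U) ((0 # map Suc js)!i) = (c#w')!i then 1 else 0)
        = (if a = c then 1 else 0) * (\<Prod>i<length w'. if sym_at U (js!i) = w'!i then 1 else (0::complex))"
        by (simp add: prod.lessThan_Suc_shift l del: prod.lessThan_Suc)
      then show ?thesis by (simp add: T_def Ew_shift)
    qed
    have s2: "T (a#U) (c#w') y (map Suc js) = y 0 * T U (c#w') y js"
      if "js \<in> inc_tuples m' (Suc (length w'))" for js
    proof -
      have l: "length js = Suc (length w')" using that by (auto simp: inc_tuples_def)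
      then have "js \<noteq> []" by auto
      then show ?thesis using l by (simp add: T_def Ew_Suc del: prod.lessThan_Suc)
    qed
    have "(\<Sum>js\<in>inc_tuples m (length w). T (a#U) w y js)
      = (\<Sum>js\<in>inc_tuples m' (length w'). T (a#U) (c#w') y (0 # map Suc js))
        + (\<Sum>js\<in>inc_tuples m' (Suc (length w')). T (a#U) (c#w') y (map Suc js))"
      unfolding m Cons by (simp add: inc_tuples_Suc sum.union_disjoint disj sum.reindex inj1 inj2)
    also have "\<dots> = (if a = c then 1 else 0) * Gf U w' (\<lambda>i. y (Suc i)) + y 0 * Gf U (c#w') y"
      using Cons.IH[OF m(2), of w' "\<lambda>i. y (Suc i)"] Cons.IH[OF m(2), of "c#w'" y]
      by (simp add: s1 s2 sum_distrib_left[symmetric])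
    finally show ?thesis using Cons by simp
  qed
qed


lemma trace_Nil: "trace_pmf q [] = return_pmf []"
  by (simp add: trace_pmf_def)

lemma trace_Cons: "trace_pmf q (a#x) = bind_pmf (bernoulli_pmf (1-q))
   (\<lambda>b. map_pmf (\<lambda>U. if b then a#U else U) (trace_pmf q x))"
proof -
  define m where "m = length x"
  define B where "B = (\<lambda>_::nat. bernoulli_pmf (1-q))"
  define h where "h = (\<lambda>i::nat. if i = 0 then m else i - 1)"
  have e: "{..<length (a#x)} = insert 0 (Suc ` {..<m})"
    by (auto simp: m_def image_iff) (metis Suc_pred lessThan_iff less_Suc_eq_0_disj)
  have bij: "bij_betw h (Suc ` {..<m}) {..<m}"
    unfolding h_def by (rule bij_betw_byWitness[where f'=Suc]) auto
  have P: "Pi_pmf (Suc ` {..<m}) False B = map_pmf (\<lambda>g. g \<circ> h) (Pi_pmf {..<m} False B)"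
    unfolding B_def by (rule Pi_pmf_bij_betw[OF _ bij]) (auto simp: h_def image_iff, metis Suc_pred lessThan_iff)
  have N: "nths (a#x) (Collect ((\<lambda>i. g (h i))(0 := b))) = (if b then a # nths x {i. g i} else nths x {i. g i})" for g b
    by (simp add: nths_Cons h_def)
  show ?thesis
    unfolding trace_pmf_def e
    apply (subst Pi_pmf_insert')
      apply simp apply force
    apply (fold B_def)
    apply (simp add: P map_bind_pmf bind_map_pmf map_pmf_def[symmetric] pmf.map_comp o_def N)
    apply (simp add: B_def m_def map_pmf_def bind_assoc_pmf bind_return_pmf N)
    done
qed


lemma set_trace: "U \<in> set_pmf (trace_pmf q x) \<Longrightarrow> length U \<le> length x \<and> set U \<subseteq> set x"
proof -
  assume "U \<in> set_pmf (trace_pmf q x)"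
  then obtain A where U: "U = nths x A" by (auto simp: trace_pmf_def)
  have "card {i. i < length x \<and> i \<in> A} \<le> card {..<length x}"
    by (rule card_mono) auto
  then show ?thesis unfolding U length_nths using set_nths_subset by simp
qed

lemma finite_trace: "finite (set_pmf (trace_pmf q x))"
proof -
  have "set_pmf (trace_pmf q x) \<subseteq> {U. set U \<subseteq> set x \<and> length U \<le> length x}"
    using set_trace by blast
  then show ?thesis using finite_lists_length_le[of "set x" "length x"] finite_subset by blast
qed

lemma exp_Cons:
  fixes f :: "nat list \<Rightarrow> complex"
  assumes "0 < q" "q < 1"
  shows "measure_pmf.expectation (trace_pmf q (a#x)) f =
    complex_of_real (1-q) * measure_pmf.expectation (trace_pmf q x) (\<lambda>U. f (a#U))
    + complex_of_real q * measure_pmf.expectation (trace_pmf q x) f"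
  using assms
  by (subst trace_Cons, subst pmf_expectation_bind[of UNIV])
     (auto simp: finite_trace UNIV_bool scaleR_conv_of_real)

lemma integrable_trace[simp]: "integrable (measure_pmf (trace_pmf q x)) (f :: _ \<Rightarrow> complex)"
  by (rule integrable_measure_pmf_finite[OF finite_trace])

lemma prob_main:
  assumes "0 < q" "q < 1"
  shows "measure_pmf.expectation (trace_pmf q x)
     (\<lambda>U. Gf U w (\<lambda>i. (z i - complex_of_real q) / complex_of_real (1 - q)))
    = complex_of_real (1-q) ^ length w * Gf x w z"
proof (induction x arbitrary: w z)
  case Nil
  then show ?case by (cases w) (auto simp: trace_Nil)
next
  case (Cons a x)
  show ?case
  proof (cases w)
    case Nil
    then show ?thesis by simp
  next
    case (Cons c w')
    define p where "p = complex_of_real (1-q)"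
    have p0: "p \<noteq> 0" using assms by (simp add: p_def)
    define t where "t = (\<lambda>i. (z i - complex_of_real q) / p)"
    have IH1: "measure_pmf.expectation (trace_pmf q x) (\<lambda>U. Gf U w' (\<lambda>i. t (Suc i))) = p ^ length w' * Gf x w' (\<lambda>i. z (Suc i))"
      using Cons.IH[of w' "\<lambda>i. z (Suc i)"] by (simp add: t_def p_def)
    have IH2: "measure_pmf.expectation (trace_pmf q x) (\<lambda>U. Gf U w t) = p ^ length w * Gf x w z"
      using Cons.IH[of w z] by (simp add: t_def p_def)
    have "measure_pmf.expectation (trace_pmf q (a#x)) (\<lambda>U. Gf U w t)
      = p * ((if a = c then 1 else 0) * measure_pmf.expectation (trace_pmf q x) (\<lambda>U. Gf U w' (\<lambda>i. t (Suc i)))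
            + t 0 * measure_pmf.expectation (trace_pmf q x) (\<lambda>U. Gf U w t))
        + complex_of_real q * measure_pmf.expectation (trace_pmf q x) (\<lambda>U. Gf U w t)"
      by (subst exp_Cons[OF assms]) (simp add: Cons p_def)
    also have "\<dots> = p ^ length w * ((if a = c then 1 else 0) * Gf x w' (\<lambda>i. z (Suc i)) + (p * t 0 + complex_of_real q) * Gf x w z)"
      unfolding IH1 IH2 by (simp add: Cons algebra_simps)
    also have "p * t 0 + complex_of_real q = z 0" using p0 by (simp add: t_def)
    finally show ?thesis by (simp add: Cons t_def p_def)
  qed
qed


lemma sum_restrict:
  assumes "length U \<le> n" "length w = l" "2 \<notin> set w"
  shows "(\<Sum>js\<in>inc_tuples n l. T U w y js) = (\<Sum>js\<in>inc_tuples (length U) l. T U w y js)"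
proof (rule sum.mono_neutral_right)
  show "inc_tuples (length U) l \<subseteq> inc_tuples n l" using assms by (auto simp: inc_tuples_def)
  show "\<forall>js\<in>inc_tuples n l - inc_tuples (length U) l. T U w y js = 0"
  proof
    fix js assume js: "js \<in> inc_tuples n l - inc_tuples (length U) l"
    then obtain j where j: "j \<in> set js" "\<not> j < length U" by (auto simp: inc_tuples_def)
    then obtain i where i: "i < length js" "js ! i = j" by (auto simp: in_set_conv_nth)
    have li: "length js = l" using js by (auto simp: inc_tuples_def)
    have "sym_at U (js ! i) \<noteq> w ! i" using i j assms li by (auto simp: sym_at_def) (metis nth_mem)
    then have "(\<Prod>i<length w. if sym_at U (js!i) = w!i then 1 else 0) = (0::complex)"
      using i li assms by (intro prod_zero) auto
    then show "T U w y js = 0" by (simp add: T_def)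
  qed
qed simp

theorem proposition2:
  fixes q :: real and x w :: "nat list" and n l :: nat and z :: "nat \<Rightarrow> complex"
  assumes "0 < q" and "q < 1"
    and "length x = n" and "set x \<subseteq> {0, 1}"
    and "1 \<le> l" and "length w = l" and "set w \<subseteq> {0, 1}"
  shows "measure_pmf.expectation (trace_pmf q x)
           (\<lambda>U. (1 / complex_of_real (1 - q)) ^ l *
              (\<Sum>js\<in>inc_tuples n l.
                 (\<Prod>i<l. if sym_at U (js ! i) = w ! i then 1 else 0) *
                 ((z 0 - complex_of_real q) / complex_of_real (1 - q)) ^ (js ! 0) *
                 (\<Prod>i\<in>{1..<l}. ((z i - complex_of_real q) / complex_of_real (1 - q))
                                    ^ (js ! i - js ! (i - 1) - 1))))
         = (\<Sum>ks\<in>inc_tuples n l.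
              (\<Prod>i<l. if x ! (ks ! i) = w ! i then 1 else 0) *
              z 0 ^ (ks ! 0) *
              (\<Prod>i\<in>{1..<l}. z i ^ (ks ! i - ks ! (i - 1) - 1)))"
proof -
  define p where "p = complex_of_real (1 - q)"
  have p0: "p \<noteq> 0" using assms by (simp add: p_def)
  define y where "y = (\<lambda>i. (z i - complex_of_real q) / p)"
  have w2: "2 \<notin> set w" using assms by auto
  have key: "(\<Sum>js\<in>inc_tuples n l.
                 (\<Prod>i<l. if sym_at U (js ! i) = w ! i then 1 else 0) *
                 y 0 ^ (js ! 0) * (\<Prod>i\<in>{1..<l}. y i ^ (js ! i - js ! (i - 1) - 1)))
        = Gf U w y" if "length U \<le> n" for U y
  proof -
    have "(\<Sum>js\<in>inc_tuples n l.
                 (\<Prod>i<l. if sym_at U (js ! i) = w ! i then 1 else 0) *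
                 y 0 ^ (js ! 0) * (\<Prod>i\<in>{1..<l}. y i ^ (js ! i - js ! (i - 1) - 1)))
        = (\<Sum>js\<in>inc_tuples n l. T U w y js)"
    proof (rule sum.cong)
      fix js assume "js \<in> inc_tuples n l"
      then have "length js = l" by (simp add: inc_tuples_def)
      then show "(\<Prod>i<l. if sym_at U (js ! i) = w ! i then 1 else 0) *
                 y 0 ^ (js ! 0) * (\<Prod>i\<in>{1..<l}. y i ^ (js ! i - js ! (i - 1) - 1)) = T U w y js"
        using Ew_prod'[of js l y] assms by (simp add: T_def mult.assoc)
    qed simp
    also have "\<dots> = (\<Sum>js\<in>inc_tuples (length U) l. T U w y js)"
      using sum_restrict[OF that assms(6) w2] .
    also have "\<dots> = Gf U w y" using comb[of U "length U" w y] assms by simp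
    finally show ?thesis .
  qed
  have rhs: "(\<Sum>ks\<in>inc_tuples n l.
              (\<Prod>i<l. if x ! (ks ! i) = w ! i then 1 else 0) *
              z 0 ^ (ks ! 0) *
              (\<Prod>i\<in>{1..<l}. z i ^ (ks ! i - ks ! (i - 1) - 1)))
     = (\<Sum>ks\<in>inc_tuples n l.
              (\<Prod>i<l. if sym_at x (ks ! i) = w ! i then 1 else 0) *
              z 0 ^ (ks ! 0) *
              (\<Prod>i\<in>{1..<l}. z i ^ (ks ! i - ks ! (i - 1) - 1)))"
  proof (rule sum.cong)
    fix ks assume ks: "ks \<in> inc_tuples n l"
    have "(\<Prod>i<l. if x ! (ks ! i) = w ! i then 1 else 0) = (\<Prod>i<l. if sym_at x (ks ! i) = w ! i then 1 else (0::complex))"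
    proof (rule prod.cong)
      fix i assume "i \<in> {..<l}"
      then have "ks ! i < n" using ks by (auto simp: inc_tuples_def)
      then show "(if x ! (ks ! i) = w ! i then 1 else 0) = (if sym_at x (ks ! i) = w ! i then 1 else (0::complex))"
        using assms by (simp add: sym_at_def)
    qed simp
    then show "(\<Prod>i<l. if x ! (ks ! i) = w ! i then 1 else 0) * z 0 ^ (ks ! 0) *
              (\<Prod>i\<in>{1..<l}. z i ^ (ks ! i - ks ! (i - 1) - 1)) =
         (\<Prod>i<l. if sym_at x (ks ! i) = w ! i then 1 else 0) * z 0 ^ (ks ! 0) *
              (\<Prod>i\<in>{1..<l}. z i ^ (ks ! i - ks ! (i - 1) - 1))" by simp
  qed simp
  have "measure_pmf.expectation (trace_pmf q x)
           (\<lambda>U. (1 / complex_of_real (1 - q)) ^ l *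
              (\<Sum>js\<in>inc_tuples n l.
                 (\<Prod>i<l. if sym_at U (js ! i) = w ! i then 1 else 0) *
                 ((z 0 - complex_of_real q) / complex_of_real (1 - q)) ^ (js ! 0) *
                 (\<Prod>i\<in>{1..<l}. ((z i - complex_of_real q) / complex_of_real (1 - q))
                                    ^ (js ! i - js ! (i - 1) - 1))))
      = measure_pmf.expectation (trace_pmf q x) (\<lambda>U. (1 / p) ^ l * Gf U w y)"
  proof (rule integral_cong_AE)
    show "AE U in measure_pmf (trace_pmf q x). (1 / complex_of_real (1 - q)) ^ l *
              (\<Sum>js\<in>inc_tuples n l.
                 (\<Prod>i<l. if sym_at U (js ! i) = w ! i then 1 else 0) *
                 ((z 0 - complex_of_real q) / complex_of_real (1 - q)) ^ (js ! 0) *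
                 (\<Prod>i\<in>{1..<l}. ((z i - complex_of_real q) / complex_of_real (1 - q))
                                    ^ (js ! i - js ! (i - 1) - 1))) = (1 / p) ^ l * Gf U w y"
    proof (rule AE_pmfI)
      fix U assume "U \<in> set_pmf (trace_pmf q x)"
      then have "length U \<le> n" using set_trace assms by blast
      from key[OF this, of y] show "(1 / complex_of_real (1 - q)) ^ l *
              (\<Sum>js\<in>inc_tuples n l.
                 (\<Prod>i<l. if sym_at U (js ! i) = w ! i then 1 else 0) *
                 ((z 0 - complex_of_real q) / complex_of_real (1 - q)) ^ (js ! 0) *
                 (\<Prod>i\<in>{1..<l}. ((z i - complex_of_real q) / complex_of_real (1 - q))
                                    ^ (js ! i - js ! (i - 1) - 1))) = (1 / p) ^ l * Gf U w y"
        by (simp add: y_def p_def)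
    qed
  qed simp_all
  also have "\<dots> = (1 / p) ^ l * (p ^ l * Gf x w z)"
    using prob_main[OF assms(1,2), of x w z] assms(6) by (simp add: y_def p_def)
  also have "\<dots> = Gf x w z" using p0 by (simp add: power_divide field_simps)
  also have "\<dots> = (\<Sum>ks\<in>inc_tuples n l.
              (\<Prod>i<l. if sym_at x (ks ! i) = w ! i then 1 else 0) *
              z 0 ^ (ks ! 0) *
              (\<Prod>i\<in>{1..<l}. z i ^ (ks ! i - ks ! (i - 1) - 1)))"
    using key[of x z] assms by simp
  finally show ?thesis using rhs by simp
qed


end
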